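(* Let $n\ge1$ be an integer and consider the hypersurface $X_n=\{w^2+x^2+y^2+z^{n+1}=0\}\subset\mathbb{C}^4$ with weights $\zeta=\left(\frac{2n+2}{n+3},\frac{2n+2}{n+3},\frac{2n+2}{n+3},\frac{4}{n+3}\right)$ on $(w,x,y,z)$. Then $a_0(0)=a_1(0)=\frac{(n+3)^3}{8(n+1)^2}$. For the test symmetry $\eta=(0,0,0,1)$ the Futaki invariant is $F=\frac{(3-n)(n+3)^3}{32(n+1)^2}$, and for $\eta=(1,0,0,0)$ it is $F=\frac{n(n+3)^3}{8(n+1)^3}$. Consequently, for $n\ge4$ there is a test symmetry with $F<0$, so $X_n$ is not K-semistable; and for $n=3$, $\eta=(0,0,0,1)$ has $F=0$ while $c_0-b_0^2/a_0=\frac{27}{128}\neq0$, so $X_3$ is not K-stable.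
   Context: Convention: for a weighted homogeneous hypersurface $\{f=0\}\subset\mathbb{C}^{N}$ with variable weights $k_i>0$ and $f$ of weighted degree $d$, and a test symmetry $\eta$ with charges $v_i$ for which the terms of $f$ of lowest $\eta$-weight have $\eta$-weight $0$, the perturbed Hilbert series is $H_\epsilon(t)=(1-t^{d})/\prod_i(1-t^{k_i+\epsilon v_i})$. With $n=N-1$ and $H_\epsilon(e^{-s})=a_0(\epsilon)s^{-n}+a_1(\epsilon)s^{-(n-1)}+O(s^{-(n-2)})$, the Futaki invariant is $F=n\,a_1'(0)-(n-1)a_0'(0)$, and $b_0=-a_0'(0)/n$, $c_0=a_0''(0)/(n(n+1))$, $a_0=a_0(0)$. A ring is K-semistable if $F\ge0$ for every test symmetry, and K-stable if moreover $F=0$ only when the norm $c_0-b_0^2/a_0$ (for non-trivial test configurations) vanishes. *)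

theory Defs
  imports "HOL-Analysis.Analysis"
begin

text \<open>A weighted homogeneous hypersurface {f = 0} in C^N is recorded by the list of
  exponent vectors (length N) of the monomials of f (all with nonzero coefficient),
  together with the list k of variable weights.\<close>

definition wdeg :: "real list \<Rightarrow> nat list \<Rightarrow> real" where
  "wdeg k \<alpha> = (\<Sum>i<length k. real (\<alpha> ! i) * k ! i)"

text \<open>weighted degree d of f (f weighted homogeneous, so any monomial may be used)\<close>
definition hdeg :: "nat list list \<Rightarrow> real list \<Rightarrow> real" where
  "hdeg monos k = wdeg k (hd monos)"

definition hilb :: "real list \<Rightarrow> real list \<Rightarrow> real \<Rightarrow> real \<Rightarrow> real \<Rightarrow> real" where
  "hilb k v d \<epsilon> t = (1 - t powr d) / (\<Prod>i<length k. (1 - t powr (k ! i + \<epsilon> * v ! i)))"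

definition dimn :: "real list \<Rightarrow> nat" where
  "dimn k = length k - 1"

text \<open>H_eps(e^-s) = a0(eps) s^-n + a1(eps) s^-(n-1) + O(s^-(n-2)) as s -> 0+\<close>
definition a0coef :: "real list \<Rightarrow> real list \<Rightarrow> real \<Rightarrow> real \<Rightarrow> real" where
  "a0coef k v d \<epsilon> = Lim (at_right 0) (\<lambda>s. s ^ dimn k * hilb k v d \<epsilon> (exp (- s)))"

definition a1coef :: "real list \<Rightarrow> real list \<Rightarrow> real \<Rightarrow> real \<Rightarrow> real" where
  "a1coef k v d \<epsilon> = Lim (at_right 0)
     (\<lambda>s. s ^ (dimn k - 1) * (hilb k v d \<epsilon> (exp (- s)) - a0coef k v d \<epsilon> / s ^ dimn k))"

definition futaki :: "real list \<Rightarrow> real list \<Rightarrow> real \<Rightarrow> real" where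
  "futaki k v d = real (dimn k) * deriv (a1coef k v d) 0
                  - (real (dimn k) - 1) * deriv (a0coef k v d) 0"

definition b0coef :: "real list \<Rightarrow> real list \<Rightarrow> real \<Rightarrow> real" where
  "b0coef k v d = - deriv (a0coef k v d) 0 / real (dimn k)"

definition c0coef :: "real list \<Rightarrow> real list \<Rightarrow> real \<Rightarrow> real" where
  "c0coef k v d = deriv (deriv (a0coef k v d)) 0 / (real (dimn k) * (real (dimn k) + 1))"

definition knorm :: "real list \<Rightarrow> real list \<Rightarrow> real \<Rightarrow> real" where
  "knorm k v d = c0coef k v d - (b0coef k v d)^2 / a0coef k v d 0"

definition ewt :: "real list \<Rightarrow> nat list \<Rightarrow> real" where
  "ewt v \<alpha> = (\<Sum>i<length v. real (\<alpha> ! i) * v ! i)"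

definition test_symmetry :: "nat list list \<Rightarrow> real list \<Rightarrow> real list \<Rightarrow> bool" where
  "test_symmetry monos k v \<longleftrightarrow> length v = length k \<and> (\<forall>i<length v. v ! i \<in> \<int>)
     \<and> Min (ewt v ` set monos) = 0"

definition K_semistable :: "nat list list \<Rightarrow> real list \<Rightarrow> bool" where
  "K_semistable monos k \<longleftrightarrow>
     (\<forall>v. test_symmetry monos k v \<longrightarrow> futaki k v (hdeg monos k) \<ge> 0)"

definition K_stable :: "nat list list \<Rightarrow> real list \<Rightarrow> bool" where
  "K_stable monos k \<longleftrightarrow> K_semistable monos k \<and>
     (\<forall>v. test_symmetry monos k v \<longrightarrow> futaki k v (hdeg monos k) = 0
          \<longrightarrow> knorm k v (hdeg monos k) = 0)"

text \<open>X_n = {w^2 + x^2 + y^2 + z^(n+1) = 0}, variables ordered (w,x,y,z)\<close>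
definition Xn_monos :: "nat \<Rightarrow> nat list list" where
  "Xn_monos n = [[2,0,0,0],[0,2,0,0],[0,0,2,0],[0,0,0,n+1]]"

definition zeta :: "nat \<Rightarrow> real list" where
  "zeta n = [(2*real n+2)/(real n+3), (2*real n+2)/(real n+3), (2*real n+2)/(real n+3),
             4/(real n+3)]"

end

theory Submission imports Defs "HOL-Real_Asymp.Real_Asymp" begin

definition T1 :: "(real \<Rightarrow> real) \<Rightarrow> real \<Rightarrow> bool" where
 "T1 f p \<longleftrightarrow> ((\<lambda>s. (f s - 1)/s) \<longlongrightarrow> p) (at_right 0)"

lemma ev_pos: "eventually (\<lambda>s. s > 0) (at_right (0::real))"
  by (simp add: eventually_at_filter)

lemma T1_lim: assumes "T1 f p" shows "(f \<longlongrightarrow> 1) (at_right 0)"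
proof -
  have "((\<lambda>s. s * ((f s - 1)/s) + 1) \<longlongrightarrow> 0 * p + 1) (at_right 0)"
    using assms unfolding T1_def by (intro tendsto_intros) (auto intro: tendsto_ident_at)
  hence "((\<lambda>s. s * ((f s - 1)/s) + 1) \<longlongrightarrow> 1) (at_right 0)" by simp
  moreover have "eventually (\<lambda>s. s * ((f s - 1)/s) + 1 = f s) (at_right (0::real))"
    using ev_pos by eventually_elim simp
  ultimately show ?thesis by (rule Lim_transform_eventually)
qed

lemma T1_mult: assumes "T1 f p" "T1 g q" shows "T1 (\<lambda>s. f s * g s) (p+q)"
proof -
  have "((\<lambda>s. f s * ((g s - 1)/s) + (f s - 1)/s) \<longlongrightarrow> 1 * q + p) (at_right 0)"
    using assms T1_lim[OF assms(1)] unfolding T1_def by (intro tendsto_intros)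
  moreover have "f s * ((g s - 1)/s) + (f s - 1)/s = (f s * g s - 1)/s" for s
    by (cases "s = 0") (simp_all add: field_simps)
  ultimately show ?thesis unfolding T1_def by (simp add: add.commute)
qed

lemma T1_div: assumes "T1 f p" "T1 g q" shows "T1 (\<lambda>s. f s / g s) (p-q)"
proof -
  have g1: "(g \<longlongrightarrow> 1) (at_right 0)" using T1_lim[OF assms(2)] .
  have "((\<lambda>s. ((f s - 1)/s - (g s - 1)/s) / g s) \<longlongrightarrow> (p - q) / 1) (at_right 0)"
    using assms g1 unfolding T1_def by (intro tendsto_intros) auto
  moreover have "eventually (\<lambda>s. g s \<noteq> 0) (at_right (0::real))"
    using tendsto_imp_eventually_ne[OF g1] by simp
  hence "eventually (\<lambda>s. ((f s - 1)/s - (g s - 1)/s) / g s = (f s / g s - 1)/s) (at_right (0::real))"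
    using ev_pos by eventually_elim (simp add: field_simps)
  ultimately show ?thesis unfolding T1_def by (simp add: tendsto_cong)
qed

lemma T1_prod: "finite I \<Longrightarrow> (\<And>i. i \<in> I \<Longrightarrow> T1 (f i) (p i)) \<Longrightarrow> T1 (\<lambda>s. \<Prod>i\<in>I. f i s) (\<Sum>i\<in>I. p i)"
proof (induction I rule: finite_induct)
  case empty
  then show ?case by (simp add: T1_def)
next
  case (insert x F)
  then show ?case using T1_mult[of "f x" "p x" "\<lambda>s. \<Prod>i\<in>F. f i s" "\<Sum>i\<in>F. p i"] by simp
qed

lemma T1_base_aux:
  fixes x :: real assumes "x>0"
  shows "((\<lambda>s. ((1 - exp(-s*x))/(x * s) - 1)/s) \<longlongrightarrow> -x/2) (at_right 0)"
  using assms by real_asymp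

lemma T1_base: assumes "x > 0" shows "T1 (\<lambda>s. (1 - exp (- s * x)) / (x * s)) (- x / 2)"
  unfolding T1_def using T1_base_aux[OF assms] by simp

lemma phi_pos: "x > 0 \<Longrightarrow> s > 0 \<Longrightarrow> (1 - exp (- s * x)) / (x * s) > (0::real)"
  by (simp add: mult_pos_pos)

lemma coefs:
  fixes k v :: "real list" and d \<epsilon> :: real
  assumes lk: "length k = 4" and d: "d > 0" and w: "\<forall>i<4. k ! i + \<epsilon> * v ! i > 0"
  shows "a0coef k v d \<epsilon> = d / (\<Prod>i<4. k ! i + \<epsilon> * v ! i)"
    and "a1coef k v d \<epsilon> = d / (\<Prod>i<4. k ! i + \<epsilon> * v ! i) * ((\<Sum>i<4. k ! i + \<epsilon> * v ! i) - d) / 2"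
proof -
  define w where "w i = k ! i + \<epsilon> * v ! i" for i
  define W where "W = (\<Prod>i<4. w i)"
  define \<phi> where "\<phi> x s = (1 - exp (- s * x)) / (x * s)" for x s :: real
  define G where "G s = \<phi> d s / (\<Prod>i<4. \<phi> (w i) s)" for s
  have wpos: "\<And>i. i<4 \<Longrightarrow> w i > 0" using w w_def by auto
  have Wpos: "W > 0" unfolding W_def using wpos by (intro prod_pos) auto
  have TG: "T1 G (-d/2 - (\<Sum>i<4. - w i/2))"
    unfolding G_def \<phi>_def by (intro T1_div T1_prod T1_base d wpos) auto
  have dimn: "dimn k = 3" using lk by (simp add: dimn_def)
  have key: "s^3 * hilb k v d \<epsilon> (exp (-s)) = d / W * G s" if s: "s > 0" for s
  proof -
    have e: "exp (-s) powr x = exp (- s * x)" for x by (simp add: powr_def)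
    have f: "1 - exp (- s * x) = x * s * \<phi> x s" if "x > 0" for x using that s by (simp add: \<phi>_def)
    have p: "(\<Prod>i<4. 1 - exp (- s * w i)) = (\<Prod>i<4. w i * s * \<phi> (w i) s)"
      by (intro prod.cong refl f wpos) auto
    have p2: "(\<Prod>i<4. w i * s * \<phi> (w i) s) = W * s^4 * (\<Prod>i<4. \<phi> (w i) s)"
      by (simp add: prod.distrib W_def)
    have hl: "hilb k v d \<epsilon> (exp (-s)) = (d * s * \<phi> d s) / (W * s^4 * (\<Prod>i<4. \<phi> (w i) s))"
      unfolding hilb_def e lk w_def[symmetric] p p2 f[OF d] ..
    have pp: "(\<Prod>i<4. \<phi> (w i) s) > 0" using wpos s by (auto intro!: prod_pos simp: \<phi>_def phi_pos)
    have "\<phi> d s > 0" using d s by (simp add: \<phi>_def phi_pos)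
    then show ?thesis unfolding hl G_def using pp Wpos s by (simp add: field_simps power_eq_if)
  qed
  have ev: "eventually (\<lambda>s. s^3 * hilb k v d \<epsilon> (exp (-s)) = d / W * G s) (at_right 0)"
    using ev_pos by eventually_elim (rule key)
  have lim0: "((\<lambda>s. s^3 * hilb k v d \<epsilon> (exp (-s))) \<longlongrightarrow> d / W) (at_right 0)"
  proof -
    have "((\<lambda>s. d / W * G s) \<longlongrightarrow> d / W * 1) (at_right 0)"
      using T1_lim[OF TG] by (intro tendsto_intros)
    then show ?thesis using ev by (simp add: tendsto_cong)
  qed
  have a0: "a0coef k v d \<epsilon> = d / W"
    unfolding a0coef_def dimn using lim0 by (intro tendsto_Lim) auto
  show "a0coef k v d \<epsilon> = d / (\<Prod>i<4. k ! i + \<epsilon> * v ! i)" using a0 W_def w_def by simp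
  have ev1: "eventually (\<lambda>s. s ^ (dimn k - 1) * (hilb k v d \<epsilon> (exp (- s)) - a0coef k v d \<epsilon> / s ^ dimn k)
        = d / W * ((G s - 1) / s)) (at_right 0)"
    using ev_pos
  proof eventually_elim
    case (elim s)
    have "hilb k v d \<epsilon> (exp (-s)) = d / W * G s / s^3" using key[OF elim] elim Wpos
      by (simp add: field_simps)
    then show ?case using elim Wpos unfolding a0 dimn by (simp add: field_simps power_eq_if)
  qed
  have lim1: "((\<lambda>s. s ^ (dimn k - 1) * (hilb k v d \<epsilon> (exp (- s)) - a0coef k v d \<epsilon> / s ^ dimn k))
        \<longlongrightarrow> d / W * (-d/2 - (\<Sum>i<4. - w i/2))) (at_right 0)"
  proof -
    have "((\<lambda>s. d / W * ((G s - 1) / s)) \<longlongrightarrow> d / W * (-d/2 - (\<Sum>i<4. - w i/2))) (at_right 0)"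
      using TG unfolding T1_def by (intro tendsto_intros)
    then show ?thesis using ev1 by (simp add: tendsto_cong)
  qed
  have "a1coef k v d \<epsilon> = d / W * (-d/2 - (\<Sum>i<4. - w i/2))"
    unfolding a1coef_def using lim1 by (intro tendsto_Lim) auto
  also have "... = d / W * ((\<Sum>i<4. w i) - d) / 2"
    by (simp add: sum_negf sum_divide_distrib[symmetric] field_simps)
  finally show "a1coef k v d \<epsilon> = d / (\<Prod>i<4. k ! i + \<epsilon> * v ! i) * ((\<Sum>i<4. k ! i + \<epsilon> * v ! i) - d) / 2"
    using W_def w_def by simp
qed

lemma sum4: "(\<Sum>i<4::nat. f i) = f 0 + f 1 + f 2 + f 3"
  by (simp add: numeral_eq_Suc add.assoc)
lemma prod4: "(\<Prod>i<4::nat. f i) = f 0 * f 1 * f 2 * f 3"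
  by (simp add: numeral_eq_Suc mult.assoc)
lemma all4: "(\<forall>i<4::nat. P i) \<longleftrightarrow> P 0 \<and> P 1 \<and> P 2 \<and> P 3"
  by (auto simp: numeral_eq_Suc less_Suc_eq)

lemma deriv_loc: "open S \<Longrightarrow> x \<in> S \<Longrightarrow> (\<And>y. y \<in> S \<Longrightarrow> f y = g y)
   \<Longrightarrow> (g has_real_derivative D) (at x) \<Longrightarrow> deriv f x = D"
proof -
  assume a: "open S" "x \<in> S" "\<And>y. y \<in> S \<Longrightarrow> f y = g y" "(g has_real_derivative D) (at x)"
  have "(f has_real_derivative D) (at x)"
    by (rule has_field_derivative_transform_within_open[OF a(4) a(1) a(2)]) (simp add: a(3))
  then show ?thesis by (rule DERIV_imp_deriv)
qed

lemma D1: "a + x \<noteq> 0 \<Longrightarrow> ((\<lambda>e. K / (a + e)) has_real_derivative - K / (a + x)^2) (at x)"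
  by (auto intro!: derivative_eq_intros simp: field_simps power2_eq_square)
lemma D2: "a + x \<noteq> 0 \<Longrightarrow> ((\<lambda>e. K * (b + e) / (a + e)) has_real_derivative K * (a - b) / (a + x)^2) (at x)"
  by (auto intro!: derivative_eq_intros simp: field_simps power2_eq_square)
lemma D3: "a + x \<noteq> 0 \<Longrightarrow> ((\<lambda>e. - K / (a + e)^2) has_real_derivative 2 * K / (a + x)^3) (at x)"
  apply (auto intro!: derivative_eq_intros)
  apply (simp add: divide_simps)
  apply (simp add: algebra_simps eval_nat_numeral)
  done

lemma hd_eq: "hdeg (Xn_monos n) (zeta n) = 2 * ((2*real n+2)/(real n+3))"
  by (simp add: hdeg_def wdeg_def Xn_monos_def zeta_def sum4)

lemma zeta_len: "length (zeta n) = 4" by (simp add: zeta_def)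
lemma dimn_zeta: "dimn (zeta n) = 3" by (simp add: zeta_def dimn_def)

lemma tsym: "test_symmetry (Xn_monos n) (zeta n) [0,0,0,1]"
  unfolding test_symmetry_def by (simp add: zeta_def all4 ewt_def sum4 Xn_monos_def less_Suc_eq)


lemma algE: assumes "(u::real) \<noteq> 0" "t \<noteq> 0" "c = 2*u/t" "q = 4/t"
  shows "2*c/(c*c*c*q) = t^3/(8*u^2)"
  using assms(1,2) unfolding assms(3,4) by (simp add: field_simps power2_eq_square power3_eq_cube)
lemma algF1: assumes "(u::real) \<noteq> 0" "t \<noteq> 0" "c = 2*u/t" "q = 4/t" "t = u + 2"
  shows "3 * ((1/(c*c)) * (q - (c + q)) / q^2) - 2 * (- (2/(c*c)) / q^2) = (4-u)*t^3/(32*u^2)"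
proof -
  have "3 * ((1/(c*c)) * (q - (c + q)) / q^2) - 2 * (- (2/(c*c)) / q^2) = (4*t - 6*u)*t^3/(64*u^2)"
    using assms(1,2) unfolding assms(3,4) by (simp add: field_simps power2_eq_square power3_eq_cube)
  also have "4*t - 6*u = 2*(4-u)" using assms(5) by simp
  also have "2*(4-u)*t^3/(64*u^2) = (4-u)*t^3/(32*u^2)" using assms(1) by (simp add: field_simps)
  finally show ?thesis .
qed
lemma algF2: assumes "(u::real) \<noteq> 0" "t \<noteq> 0" "c = 2*u/t" "q = 4/t" "t = u + 2"
  shows "3 * ((1/(c*q)) * (c - (c + q)) / c^2) - 2 * (- (2/(c*q)) / c^2) = (u-1)*t^3/(8*u^3)"
proof -
  have "3 * ((1/(c*q)) * (c - (c + q)) / c^2) - 2 * (- (2/(c*q)) / c^2) = (4 * t - 12) * t^3 / (32*u^3)"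
    using assms(1,2) unfolding assms(3,4) by (simp add: field_simps power2_eq_square power3_eq_cube)
  also have "4*t - 12 = 4*(u-1)" using assms(5) by simp
  also have "4*(u-1)*t^3/(32*u^3) = (u-1)*t^3/(8*u^3)" using assms(1) by (simp add: field_simps)
  finally show ?thesis .
qed
lemma algcq: assumes "(u::real) \<noteq> 0" "t \<noteq> 0" "c = 2*u/t" "q = 4/t" "t = u + 2"
  shows "c + q = 2"
proof -
  have "c + q = (2*u+4)/t" unfolding assms(3,4) by (simp add: add_divide_distrib)
  also have "2*u+4 = 2*t" using assms(5) by simp
  finally show ?thesis using assms(2) by simp
qed

lemma h1: "(c::real) \<noteq> 0 \<Longrightarrow> x \<noteq> 0 \<Longrightarrow> 2*c/(c*c*c*x) = (2/(c*c))/x"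
  by (simp add: field_simps)
lemma h2: "(c::real) \<noteq> 0 \<Longrightarrow> x \<noteq> 0 \<Longrightarrow> 2*c/(c*c*c*x) * ((c+c+c+x) - 2*c)/2 = (1/(c*c)) * (c + x)/x"
  by (simp add: field_simps)
lemma h3: "(c::real) \<noteq> 0 \<Longrightarrow> q \<noteq> 0 \<Longrightarrow> x \<noteq> 0 \<Longrightarrow> 2*c/(x*c*c*q) = (2/(c*q))/x"
  by (simp add: field_simps)
lemma h4: "(c::real) \<noteq> 0 \<Longrightarrow> q \<noteq> 0 \<Longrightarrow> x \<noteq> 0 \<Longrightarrow> 2*c/(x*c*c*q) * ((x+c+c+q) - 2*c)/2 = (1/(c*q)) * (x + q)/x"
  by (simp add: field_simps)

theorem mainTheorem3:
  fixes n :: nat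
  assumes "n \<ge> 1"
  shows "(\<forall>v. length v = 4 \<longrightarrow>
            a0coef (zeta n) v (hdeg (Xn_monos n) (zeta n)) 0 = (real n+3)^3 / (8*(real n+1)^2)
          \<and> a1coef (zeta n) v (hdeg (Xn_monos n) (zeta n)) 0 = (real n+3)^3 / (8*(real n+1)^2))
       \<and> futaki (zeta n) [0,0,0,1] (hdeg (Xn_monos n) (zeta n))
           = (3 - real n) * (real n+3)^3 / (32*(real n+1)^2)
       \<and> futaki (zeta n) [1,0,0,0] (hdeg (Xn_monos n) (zeta n))
           = real n * (real n+3)^3 / (8*(real n+1)^3)
       \<and> (n \<ge> 4 \<longrightarrow> (\<exists>v. test_symmetry (Xn_monos n) (zeta n) v
                         \<and> futaki (zeta n) v (hdeg (Xn_monos n) (zeta n)) < 0)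
                   \<and> \<not> K_semistable (Xn_monos n) (zeta n))
       \<and> (n = 3 \<longrightarrow> test_symmetry (Xn_monos n) (zeta n) [0,0,0,1]
                   \<and> futaki (zeta n) [0,0,0,1] (hdeg (Xn_monos n) (zeta n)) = 0
                   \<and> knorm (zeta n) [0,0,0,1] (hdeg (Xn_monos n) (zeta n)) = 27/128
                   \<and> \<not> K_stable (Xn_monos n) (zeta n))"
proof -
  define u where "u = real n + 1"
  define t where "t = real n + 3"
  define c where "c = 2*u/t"
  define q where "q = 4/t"
  have upos: "u > 0" unfolding u_def by simp
  have tpos: "t > 0" unfolding t_def by simp
  have tu: "t = u + 2" unfolding t_def u_def by simp
  have u0: "u \<noteq> 0" and t0: "t \<noteq> 0" using upos tpos by auto
  have cpos: "c > 0" and qpos: "q > 0" unfolding c_def q_def using upos tpos by auto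
  have n3p: "real n + 3 > 0" by simp
  have nz: "real n + 3 \<noteq> 0" "2 * real n + 2 \<noteq> 0" "real n + 1 \<noteq> 0" by simp_all
  have cq: "c + q = 2" using algcq[OF u0 t0 c_def q_def tu] .
  have ce: "(2*real n+2)/(real n+3) = c" unfolding c_def u_def t_def by (simp add: algebra_simps)
  have qe: "4/(real n+3) = q" unfolding q_def t_def by (simp add: algebra_simps)
  have zn: "zeta n = [c,c,c,q]" unfolding zeta_def ce qe by simp
  have hd: "hdeg (Xn_monos n) (zeta n) = 2*c" using hd_eq[of n] unfolding ce .
  have un: "real n + 3 = t" "real n + 1 = u" "3 - real n = 4 - u" "real n = u - 1" unfolding u_def t_def by simp_all
  have dpos: "2*c > 0" using cpos by simp
  have dz: "dimn (zeta n) = 3" by (rule dimn_zeta)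
  have E: "2*c/(c*c*c*q) = (real n+3)^3/(8*(real n+1)^2)"
    unfolding un(1,2) using algE[OF u0 t0 c_def q_def] .
  have P1: "a0coef (zeta n) v (2*c) 0 = (real n+3)^3/(8*(real n+1)^2)
       \<and> a1coef (zeta n) v (2*c) 0 = (real n+3)^3/(8*(real n+1)^2)" if "length v = 4" for v
  proof -
    have w: "\<forall>i<4. zeta n ! i + 0 * v ! i > 0" using cpos qpos by (simp add: zn all4)
    have A: "a0coef (zeta n) v (2*c) 0 = 2*c/(c*c*c*q)"
      using coefs(1)[OF zeta_len dpos w] by (simp add: zn prod4)
    have B: "a1coef (zeta n) v (2*c) 0 = 2*c/(c*c*c*q) * ((c+c+c+q) - 2*c)/2"
      using coefs(2)[OF zeta_len dpos w] by (simp add: zn prod4 sum4)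
    have B2: "(c+c+c+q) - 2*c = 2" using cq by simp
    show ?thesis using A B B2 E by simp
  qed
  define S1 where "S1 = {-q<..}"
  have oS1: "open S1" and z1: "0 \<in> S1" unfolding S1_def using qpos by auto
  define K0 where "K0 = 2/(c*c)"
  define K1 where "K1 = 1/(c*c)"
  have a0e: "a0coef (zeta n) [0,0,0,1] (2*c) e = K0 / (q + e)" if "e \<in> S1" for e
  proof -
    have qe: "q + e > 0" using that S1_def by auto
    have w: "\<forall>i<4. zeta n ! i + e * [0,0,0,1] ! i > 0" using cpos qe by (simp add: zn all4)
    have r: "a0coef (zeta n) [0,0,0,1] (2*c) e = 2*c/(c*c*c*(q+e))"
      using coefs(1)[OF zeta_len dpos w] by (simp add: zn prod4)
    show ?thesis unfolding r K0_def by (rule h1) (use cpos qe in auto)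
  qed
  have a1e: "a1coef (zeta n) [0,0,0,1] (2*c) e = K1 * ((c + q) + e) / (q + e)" if "e \<in> S1" for e
  proof -
    have qe: "q + e > 0" using that S1_def by auto
    have w: "\<forall>i<4. zeta n ! i + e * [0,0,0,1] ! i > 0" using cpos qe by (simp add: zn all4)
    have r: "a1coef (zeta n) [0,0,0,1] (2*c) e = 2*c/(c*c*c*(q+e)) * ((c+c+c+(q+e)) - 2*c)/2"
      using coefs(2)[OF zeta_len dpos w] by (simp add: zn prod4 sum4)
    have "(c + q) + e = c + (q + e)" by simp
    then show ?thesis unfolding r K1_def by (simp only:) (rule h2, use cpos qe in auto)
  qed
  have d0: "deriv (a0coef (zeta n) [0,0,0,1] (2*c)) 0 = - K0 / (q + 0)^2"
    by (rule deriv_loc[OF oS1 z1 a0e D1]) (use qpos in auto)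
  have d1: "deriv (a1coef (zeta n) [0,0,0,1] (2*c)) 0 = K1 * (q - (c + q)) / (q + 0)^2"
    by (rule deriv_loc[OF oS1 z1 a1e D2]) (use qpos in auto)
  have F1': "futaki (zeta n) [0,0,0,1] (2*c) = 3 * (K1 * (q - (c + q)) / q^2) - 2 * (- K0 / q^2)"
    unfolding futaki_def dz d0 d1 by simp
  have F1: "futaki (zeta n) [0,0,0,1] (2*c) = (3 - real n) * (real n+3)^3 / (32*(real n+1)^2)"
    unfolding F1' K0_def K1_def un(1,2,3) using algF1[OF u0 t0 c_def q_def tu] .
  define S2 where "S2 = {-c<..}"
  have oS2: "open S2" and z2: "0 \<in> S2" unfolding S2_def using cpos by auto
  define L0 where "L0 = 2/(c*q)"
  define L1 where "L1 = 1/(c*q)"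
  have b0e: "a0coef (zeta n) [1,0,0,0] (2*c) e = L0 / (c + e)" if "e \<in> S2" for e
  proof -
    have ce: "c + e > 0" using that S2_def by auto
    have w: "\<forall>i<4. zeta n ! i + e * [1,0,0,0] ! i > 0" using cpos qpos ce by (simp add: zn all4)
    have r: "a0coef (zeta n) [1,0,0,0] (2*c) e = 2*c/((c+e)*c*c*q)"
      using coefs(1)[OF zeta_len dpos w] by (simp add: zn prod4)
    show ?thesis unfolding r L0_def by (rule h3) (use cpos qpos ce in auto)
  qed
  have b1e: "a1coef (zeta n) [1,0,0,0] (2*c) e = L1 * ((c + q) + e) / (c + e)" if "e \<in> S2" for e
  proof -
    have ce: "c + e > 0" using that S2_def by auto
    have w: "\<forall>i<4. zeta n ! i + e * [1,0,0,0] ! i > 0" using cpos qpos ce by (simp add: zn all4)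
    have r: "a1coef (zeta n) [1,0,0,0] (2*c) e = 2*c/((c+e)*c*c*q) * (((c+e)+c+c+q) - 2*c)/2"
      using coefs(2)[OF zeta_len dpos w] by (simp add: zn prod4 sum4)
    have "(c + q) + e = (c + e) + q" by simp
    then show ?thesis unfolding r L1_def by (simp only:) (rule h4, use cpos qpos ce in auto)
  qed
  have e0: "deriv (a0coef (zeta n) [1,0,0,0] (2*c)) 0 = - L0 / (c + 0)^2"
    by (rule deriv_loc[OF oS2 z2 b0e D1]) (use cpos in auto)
  have e1: "deriv (a1coef (zeta n) [1,0,0,0] (2*c)) 0 = L1 * (c - (c + q)) / (c + 0)^2"
    by (rule deriv_loc[OF oS2 z2 b1e D2]) (use cpos in auto)
  have F2': "futaki (zeta n) [1,0,0,0] (2*c) = 3 * (L1 * (c - (c + q)) / c^2) - 2 * (- L0 / c^2)"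
    unfolding futaki_def dz e0 e1 by simp
  have F2: "futaki (zeta n) [1,0,0,0] (2*c) = real n * (real n+3)^3 / (8*(real n+1)^3)"
    unfolding F2' L0_def L1_def un(1,2) using algF2[OF u0 t0 c_def q_def tu] by (simp add: un(4))
  have P4: "(\<exists>v. test_symmetry (Xn_monos n) (zeta n) v
                         \<and> futaki (zeta n) v (2*c) < 0)
                   \<and> \<not> K_semistable (Xn_monos n) (zeta n)" if n4: "n \<ge> 4"
  proof -
    have "(3 - real n) * (real n+3)^3 / (32*(real n+1)^2) < 0"
      using n4 by (intro divide_neg_pos mult_neg_pos) auto
    hence neg: "futaki (zeta n) [0,0,0,1] (2*c) < 0" using F1 by simp
    show ?thesis unfolding K_semistable_def hd using neg tsym by (auto intro!: exI[of _ "[0,0,0,1]"])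
  qed
  have P5: "test_symmetry (Xn_monos n) (zeta n) [0,0,0,1]
                   \<and> futaki (zeta n) [0,0,0,1] (2*c) = 0
                   \<and> knorm (zeta n) [0,0,0,1] (2*c) = 27/128
                   \<and> \<not> K_stable (Xn_monos n) (zeta n)" if n3: "n = 3"
  proof -
    have f0: "futaki (zeta n) [0,0,0,1] (2*c) = 0" using F1 n3 by simp
    have dd: "deriv (a0coef (zeta n) [0,0,0,1] (2*c)) y = - K0 / (q + y)^2" if "y \<in> S1" for y
      by (rule deriv_loc[OF oS1 that a0e D1]) (use that S1_def in auto)
    have d2: "deriv (deriv (a0coef (zeta n) [0,0,0,1] (2*c))) 0 = 2 * K0 / (q + 0)^3"
      by (rule deriv_loc[OF oS1 z1 dd D3]) (use qpos in auto)
    have kn: "knorm (zeta n) [0,0,0,1] (2*c) = 27/128"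
      unfolding knorm_def c0coef_def b0coef_def dz d2 d0 a0e[OF z1]
      unfolding K0_def c_def q_def u_def t_def n3 by (simp add: field_simps eval_nat_numeral)
    show ?thesis unfolding K_stable_def hd using f0 kn tsym[of n] by (auto intro!: exI[of _ "[0,0,0,1]"])
  qed
  show ?thesis unfolding hd using P1 F1 F2 P4 P5 by auto
qed

end
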